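(* Let $\beta>0$, $T>0$, $\lambda>0$, put $M=\beta T$, and let $B_M$ satisfy $0<B_M<\beta T$. Let $T_{\text{th}}=\dfrac{M}{\ln(1+M/\lambda)}$ and, for $x\ge 0$, $$P_{e|1}(x)=\sum_{y\in\mathbb{Z}_{\ge 0},\, y<T_{\text{th}}} e^{-(x+\lambda)}\frac{(x+\lambda)^y}{y!}.$$ Consider the optimization problem over real sequences $\{\Delta_i\}_{i=1}^\infty$: $$\min_{\{\Delta_i\}} F(\{\Delta_i\})=\sum_{j=1}^{\infty}\frac{1}{2^{j}}P_{e|1}(M+\Delta_j)\quad\text{s.t.}\quad B_M-\sum_{j=1}^{i}\Delta_j\ge 0\ \text{ and }\ \sum_{j=1}^{i}\Delta_j\ge 0\ \text{ for all } i\ge 1.$$ Then the optimal solution $\{\Delta^*_i\}_{i=1}^\infty$ of this problem is a decreasing (i.e. $\Delta^*_{i+1}\le \Delta^*_i$ for all $i$) sequence of nonnegative numbers.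
   Context: This is the "no-ISI" adaptive release-duration problem for a molecular transmitter with molecule production rate $\beta$, slot length $T$, storage capacity $B_M=\beta(T-T_M)$ (with $T_M$ the non-adaptive release duration); $\Delta_i$ is the increment of the number of released molecules (for bit "1") in state $s_{i-1}$, i.e. after $i-1$ consecutive "1"s following the last "0". $P_{e|1}(x)$ is the probability that a Poisson$(x+\lambda)$ count falls below the fixed threshold $T_{\text{th}}$. The paper assumes $M\gg\lambda$, so that $T_{\text{th}}<M$. *)

theory Defs
  imports Complex_Main
begin

definition T_th :: "real \<Rightarrow> real \<Rightarrow> real" where
  "T_th M lam = M / ln (1 + M / lam)"

definition P_e1 :: "real \<Rightarrow> real \<Rightarrow> real \<Rightarrow> real" where
  "P_e1 th lam x = (\<Sum>y\<in>{y::nat. real y < th}. exp (-(x + lam)) * (x + lam) ^ y / fact y)"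

(* sequences Delta are indexed from 1; the value Delta 0 is irrelevant *)
definition feasible :: "real \<Rightarrow> (nat \<Rightarrow> real) \<Rightarrow> bool" where
  "feasible B_M \<Delta> \<longleftrightarrow> (\<forall>i\<ge>1. B_M - (\<Sum>j=1..i. \<Delta> j) \<ge> 0 \<and> (\<Sum>j=1..i. \<Delta> j) \<ge> 0)"

definition objective :: "real \<Rightarrow> real \<Rightarrow> real \<Rightarrow> (nat \<Rightarrow> real) \<Rightarrow> real" where
  "objective M th lam \<Delta> = (\<Sum>j. (1 / 2 ^ (Suc j)) * P_e1 th lam (M + \<Delta> (Suc j)))"

end

theory Submission
  imports Defs "HOL-Analysis.Analysis"
begin


definition Fs :: "nat \<Rightarrow> real \<Rightarrow> real" where
  "Fs n \<mu> = (\<Sum>y<Suc n. exp (-\<mu>) * \<mu> ^ y / fact y)"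

definition gk :: "nat \<Rightarrow> real \<Rightarrow> real" where
  "gk n \<mu> = exp (-\<mu>) * \<mu> ^ n / fact n"

lemma Fs_deriv: "(Fs n has_real_derivative - gk n \<mu>) (at \<mu>)"
proof (induction n)
  case 0
  show ?case unfolding Fs_def gk_def by (auto intro!: derivative_eq_intros)
next
  case (Suc n)
  have e: "Fs (Suc n) = (\<lambda>\<mu>. Fs n \<mu> + exp (-\<mu>) * \<mu> ^ Suc n / fact (Suc n))"
    by (rule ext) (simp add: Fs_def)
  have d1: "((\<lambda>\<mu>. exp (-\<mu>)) has_real_derivative - exp (-\<mu>)) (at \<mu>)"
    by (auto intro!: derivative_eq_intros)
  have d2: "((\<lambda>\<mu>. \<mu> ^ Suc n) has_real_derivative real (Suc n) * \<mu> ^ n) (at \<mu>)"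
    using DERIV_pow[of "Suc n" \<mu>] by simp
  have d: "((\<lambda>\<mu>. exp (-\<mu>) * \<mu> ^ Suc n / fact (Suc n)) has_real_derivative
      (- exp (-\<mu>) * \<mu> ^ Suc n + exp (-\<mu>) * (real (Suc n) * \<mu> ^ n)) / fact (Suc n)) (at \<mu>)"
    using DERIV_cdivide[OF DERIV_mult[OF d1 d2], of "fact (Suc n)"] by (simp add: algebra_simps)
  have "- gk n \<mu> + (- exp (-\<mu>) * \<mu> ^ Suc n + exp (-\<mu>) * (real (Suc n) * \<mu> ^ n)) / fact (Suc n)
        = - gk (Suc n) \<mu>"
  proof -
    have f: "fact (Suc n) = real (Suc n) * fact n" by simp
    have "exp (-\<mu>) * (real (Suc n) * \<mu> ^ n) / (real (Suc n) * fact n) = exp (-\<mu>) * \<mu> ^ n / fact n"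
      by simp
    then show ?thesis unfolding f gk_def by (simp add: add_divide_distrib diff_divide_distrib)
  qed
  then show ?case unfolding e using DERIV_add[OF Suc d] by simp
qed

lemma gk_pos: "\<mu> > 0 \<Longrightarrow> gk n \<mu> > 0"
  unfolding gk_def by simp

lemma gk_exp: "\<mu> > 0 \<Longrightarrow> gk n \<mu> = exp (real n * ln \<mu> - \<mu>) / fact n"
  unfolding gk_def by (simp add: exp_diff exp_of_nat_mult exp_minus field_simps)

lemma Fs_mvt:
  assumes "a < b"
  shows "\<exists>z. a < z \<and> z < b \<and> Fs n b - Fs n a = - (b - a) * gk n z"
proof -
  obtain z where "a < z" "z < b" "Fs n b - Fs n a = (b - a) * (- gk n z)"
    using MVT2[OF assms, of "Fs n" "\<lambda>x. - gk n x"] Fs_deriv by blast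
  then show ?thesis by (intro exI[of _ z]) (simp add: algebra_simps)
qed

lemma gk_right:
  assumes "0 < \<mu>0" "\<mu>0 \<le> \<mu>" "real k \<le> \<mu>0"
  shows "gk k \<mu> \<le> gk k \<mu>0"
proof -
  have mu: "\<mu> > 0" using assms by simp
  have "ln \<mu> - ln \<mu>0 = ln (\<mu> / \<mu>0)" using assms mu by (simp add: ln_div)
  also have "\<dots> \<le> \<mu> / \<mu>0 - 1" using mu assms by (intro ln_le_minus_one) simp
  also have "\<dots> = (\<mu> - \<mu>0) / \<mu>0" using assms by (simp add: field_simps)
  finally have l: "ln \<mu> - ln \<mu>0 \<le> (\<mu> - \<mu>0) / \<mu>0" .
  have "real k * (ln \<mu> - ln \<mu>0) \<le> real k * ((\<mu> - \<mu>0) / \<mu>0)"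
    using l by (intro mult_left_mono) auto
  also have "\<dots> = (real k / \<mu>0) * (\<mu> - \<mu>0)" by simp
  also have "\<dots> \<le> 1 * (\<mu> - \<mu>0)"
    using assms by (intro mult_right_mono) auto
  finally have "real k * ln \<mu> - \<mu> \<le> real k * ln \<mu>0 - \<mu>0" by (simp add: algebra_simps)
  then show ?thesis using mu assms by (simp add: gk_exp divide_right_mono)
qed

lemma gk_left:
  assumes "0 < l" "l \<le> \<mu>" "\<mu> \<le> \<mu>0" "l < \<mu>0" "real k * (ln \<mu>0 - ln l) \<le> \<mu>0 - l"
  shows "gk k \<mu>0 \<le> gk k \<mu>"
proof -
  define t where "t = (\<mu>0 - \<mu>) / (\<mu>0 - l)"
  have t0: "0 \<le> t" "t \<le> 1" using assms unfolding t_def by (auto simp: field_simps)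
  have tt: "t * (\<mu>0 - l) = \<mu>0 - \<mu>" using assms unfolding t_def by simp
  have mu: "(1 - t) * \<mu>0 + t * l = \<mu>"
  proof -
    have "(1 - t) * \<mu>0 + t * l = \<mu>0 - t * (\<mu>0 - l)" by (simp add: algebra_simps)
    then show ?thesis using tt by linarith
  qed
  have "(1 - t) * ln \<mu>0 + t * ln l \<le> ln ((1 - t) * \<mu>0 + t * l)"
    using concave_onD[OF ln_concave, of t \<mu>0 l] assms t0 by simp
  then have c: "(1 - t) * ln \<mu>0 + t * ln l \<le> ln \<mu>" unfolding mu .
  have l1: "ln \<mu>0 - ln \<mu> \<le> t * (ln \<mu>0 - ln l)" using c by (simp add: algebra_simps)
  have "real k * (ln \<mu>0 - ln \<mu>) \<le> real k * (t * (ln \<mu>0 - ln l))"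
    using l1 by (intro mult_left_mono) auto
  also have "\<dots> = t * (real k * (ln \<mu>0 - ln l))" by simp
  also have "\<dots> \<le> t * (\<mu>0 - l)" using assms t0 by (intro mult_left_mono) auto
  also have "\<dots> = \<mu>0 - \<mu>" using tt .
  finally have "real k * ln \<mu>0 - \<mu>0 \<le> real k * ln \<mu> - \<mu>" by (simp add: algebra_simps)
  then show ?thesis using assms by (simp add: gk_exp divide_right_mono)
qed



lemma th_props:
  assumes "0 < lam" "0 < M"
  shows "T_th M lam > 0" "T_th M lam \<le> lam + M" "T_th M lam * ln (1 + M / lam) = M"
    "ln (1 + M / lam) > 0"
proof -
  define u where "u = M / lam"
  have u: "u > 0" using assms by (simp add: u_def)
  have L: "ln (1 + u) > 0" using u by simp
  have "ln (1 / (1 + u)) \<le> 1 / (1 + u) - 1" using u by (intro ln_le_minus_one) simp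
  then have "- ln (1 + u) \<le> - u / (1 + u)" using u by (simp add: ln_div field_simps)
  then have L2: "u / (1 + u) \<le> ln (1 + u)" by simp
  show "ln (1 + M / lam) > 0" using L u_def by simp
  show "T_th M lam > 0" unfolding T_th_def using L assms u_def by simp
  show "T_th M lam * ln (1 + M / lam) = M" unfolding T_th_def using L u_def by simp
  have "M = lam * u" using assms u_def by simp
  have "M \<le> (lam + M) * ln (1 + u)"
  proof -
    have e: "lam + M = lam * (1 + u)" using assms u_def by (simp add: field_simps)
    have "(lam + M) * (u / (1 + u)) = lam * u" unfolding e using u by simp
    then have "(lam + M) * (u / (1 + u)) = M" using assms u_def by simp
    moreover have "(lam + M) * (u / (1 + u)) \<le> (lam + M) * ln (1 + u)"
      using L2 assms by (intro mult_left_mono) auto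
    ultimately show ?thesis by simp
  qed
  then show "T_th M lam \<le> lam + M" unfolding T_th_def using L u_def by (simp add: divide_le_eq)
qed

lemma set_eq:
  assumes "th > 0"
  shows "{y::nat. real y < th} = {..<Suc (nat \<lceil>th\<rceil> - 1)}" "real (nat \<lceil>th\<rceil> - 1) < th"
proof -
  have c1: "nat \<lceil>th\<rceil> \<ge> 1" using assms less_eq_Suc_le zero_less_nat_eq by force
  have "real y < th \<longleftrightarrow> y < nat \<lceil>th\<rceil>" for y :: nat
    by linarith
  note eq = this
  have s: "Suc (nat \<lceil>th\<rceil> - 1) = nat \<lceil>th\<rceil>" using c1 by simp
  show "{y::nat. real y < th} = {..<Suc (nat \<lceil>th\<rceil> - 1)}" unfolding s using eq by auto
  show "real (nat \<lceil>th\<rceil> - 1) < th" using eq[of "nat \<lceil>th\<rceil> - 1"] c1 by simp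
qed



lemma key_facts:
  fixes lam M B :: real
  assumes lam: "0 < lam" and B: "0 < B" "B < M"
  shows "\<exists>c>0. \<exists>C.
     (\<forall>x y. -B \<le> x \<longrightarrow> x \<le> y \<longrightarrow> y \<le> 0 \<longrightarrow> c * (y - x) \<le> P_e1 (T_th M lam) lam (M + x) - P_e1 (T_th M lam) lam (M + y)) \<and>
     (\<forall>x y. 0 \<le> x \<longrightarrow> x \<le> y \<longrightarrow> P_e1 (T_th M lam) lam (M + x) - P_e1 (T_th M lam) lam (M + y) \<le> c * (y - x)) \<and>
     (\<forall>x y. -B \<le> x \<longrightarrow> x < y \<longrightarrow> P_e1 (T_th M lam) lam (M + y) < P_e1 (T_th M lam) lam (M + x)) \<and>
     (\<forall>x. -B \<le> x \<longrightarrow> x \<le> B \<longrightarrow> \<bar>P_e1 (T_th M lam) lam (M + x)\<bar> \<le> C)"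
proof -
  have M: "0 < M" using B by simp
  define th where "th = T_th M lam"
  define k where "k = nat \<lceil>th\<rceil> - 1"
  define \<mu>0 where "\<mu>0 = M + lam"
  note thp = th_props[OF lam M, folded th_def]
  have Peq: "P_e1 th lam x = Fs k (x + lam)" for x
    unfolding P_e1_def Fs_def k_def set_eq(1)[OF thp(1)] ..
  have kth: "real k \<le> th" using set_eq(2)[OF thp(1)] unfolding k_def by simp
  have kmu: "real k \<le> \<mu>0" using kth thp(2) unfolding \<mu>0_def by simp
  have mu0: "\<mu>0 > 0" using M lam unfolding \<mu>0_def by simp
  have lnq: "ln \<mu>0 - ln lam = ln (1 + M / lam)"
  proof -
    have "1 + M / lam = \<mu>0 / lam" using lam unfolding \<mu>0_def by (simp add: field_simps)
    then show ?thesis using mu0 lam by (simp add: ln_div)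
  qed
  have kcond: "real k * (ln \<mu>0 - ln lam) \<le> \<mu>0 - lam"
  proof -
    have "real k * (ln \<mu>0 - ln lam) \<le> th * (ln \<mu>0 - ln lam)"
      using kth thp(4) lnq by (intro mult_right_mono) auto
    also have "\<dots> = M" using thp(3) lnq by simp
    finally show ?thesis unfolding \<mu>0_def by simp
  qed
  define c where "c = gk k \<mu>0"
  have c: "c > 0" unfolding c_def using gk_pos mu0 by simp
  define C where "C = (\<Sum>y<Suc k. (2 * \<mu>0) ^ y / fact y)"
  have N: "c * (y - x) \<le> P_e1 th lam (M + x) - P_e1 th lam (M + y)"
    if "-B \<le> x" "x \<le> y" "y \<le> 0" for x y
  proof (cases "x = y")
    case False
    then have xy: "M + x + lam < M + y + lam" using that by simp
    obtain z where z: "M + x + lam < z" "z < M + y + lam"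
      "Fs k (M + y + lam) - Fs k (M + x + lam) = - ((M + y + lam) - (M + x + lam)) * gk k z"
      using Fs_mvt[OF xy] by blast
    have "c \<le> gk k z" unfolding c_def
      using gk_left[OF lam _ _ _ kcond] z that B unfolding \<mu>0_def by simp
    then have "c * (y - x) \<le> gk k z * (y - x)" using that by (intro mult_right_mono) auto
    then show ?thesis unfolding Peq using z(3) by (simp add: algebra_simps)
  qed simp
  have Pz: "P_e1 th lam (M + x) - P_e1 th lam (M + y) \<le> c * (y - x)"
    if "0 \<le> x" "x \<le> y" for x y
  proof (cases "x = y")
    case False
    then have xy: "M + x + lam < M + y + lam" using that by simp
    obtain z where z: "M + x + lam < z" "z < M + y + lam"
      "Fs k (M + y + lam) - Fs k (M + x + lam) = - ((M + y + lam) - (M + x + lam)) * gk k z"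
      using Fs_mvt[OF xy] by blast
    have "gk k z \<le> c" unfolding c_def
      using gk_right[OF mu0 _ kmu] z that unfolding \<mu>0_def by simp
    then have "gk k z * (y - x) \<le> c * (y - x)" using that by (intro mult_right_mono) auto
    then show ?thesis unfolding Peq using z(3) by (simp add: algebra_simps)
  qed simp
  have S: "P_e1 th lam (M + y) < P_e1 th lam (M + x)"
    if "-B \<le> x" "x < y" for x y
  proof -
    have xy: "M + x + lam < M + y + lam" using that by simp
    obtain z where z: "M + x + lam < z" "z < M + y + lam"
      "Fs k (M + y + lam) - Fs k (M + x + lam) = - ((M + y + lam) - (M + x + lam)) * gk k z"
      using Fs_mvt[OF xy] by blast
    have "gk k z > 0" using gk_pos z that B lam by simp
    then have "0 < gk k z * (y - x)" using that by simp
    then show ?thesis unfolding Peq using z(3) by (simp add: algebra_simps)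
  qed
  have Bd: "\<bar>P_e1 th lam (M + x)\<bar> \<le> C" if "-B \<le> x" "x \<le> B" for x
  proof -
    define m where "m = M + x + lam"
    have m: "0 \<le> m" "m \<le> 2 * \<mu>0" using that B lam unfolding m_def \<mu>0_def by auto
    have "\<bar>Fs k m\<bar> \<le> (\<Sum>y<Suc k. \<bar>exp (-m) * m ^ y / fact y\<bar>)"
      unfolding Fs_def by (rule sum_abs)
    also have "\<dots> \<le> C" unfolding C_def
    proof (rule sum_mono)
      fix y assume "y \<in> {..<Suc k}"
      have "exp (-m) \<le> 1" using m by simp
      moreover have "m ^ y \<le> (2 * \<mu>0) ^ y" using m by (intro power_mono) auto
      ultimately have "exp (-m) * m ^ y \<le> 1 * (2 * \<mu>0) ^ y"
        using m by (intro mult_mono) auto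
      then show "\<bar>exp (-m) * m ^ y / fact y\<bar> \<le> (2 * \<mu>0) ^ y / fact y"
        using m by (simp add: divide_right_mono abs_mult)
    qed
    finally show ?thesis unfolding Peq m_def by (simp add: add.commute add.left_commute)
  qed
  show ?thesis unfolding th_def[symmetric]
    using c N Pz S Bd by blast
qed



lemma summ_w:
  fixes h :: "nat \<Rightarrow> real"
  assumes "\<And>j. \<bar>h j\<bar> \<le> C"
  shows "summable (\<lambda>j. (1 / 2 ^ Suc j) * h j)"
proof (rule summable_comparison_test)
  show "summable (\<lambda>j. C * (1 / 2) ^ j)"
    by (intro summable_mult summable_geometric) simp
  show "\<exists>N. \<forall>n\<ge>N. norm ((1 / 2 ^ Suc n) * h n) \<le> C * (1 / 2) ^ n"
  proof (intro exI allI impI)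
    fix n :: nat
    have "norm ((1 / 2 ^ Suc n) * h n) = (1 / 2 ^ Suc n) * \<bar>h n\<bar>" by (simp add: abs_mult)
    also have "\<dots> \<le> (1 / 2 ^ Suc n) * C" using assms by (intro mult_left_mono) auto
    also have "\<dots> \<le> C * (1 / 2) ^ n"
    proof -
      have "0 \<le> C" using assms[of 0] by simp
      then show ?thesis by (simp add: power_one_over field_simps)
    qed
    finally show "norm ((1 / 2 ^ Suc n) * h n) \<le> C * (1 / 2) ^ n" .
  qed
qed

primrec rmax :: "(nat \<Rightarrow> real) \<Rightarrow> nat \<Rightarrow> real" where
  "rmax S 0 = 0"
| "rmax S (Suc j) = max (rmax S j) (S (Suc j))"

lemma psum_Suc: "(\<Sum>l = 1..Suc j. (f::nat \<Rightarrow> real) l) = (\<Sum>l = 1..j. f l) + f (Suc j)"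
  by (simp add: sum.cl_ivl_Suc)



theorem lemma1:
  fixes \<beta> T lam B_M :: real and \<Delta> :: "nat \<Rightarrow> real"
  assumes "\<beta> > 0" "T > 0" "lam > 0" "0 < B_M" "B_M < \<beta> * T"
    and "feasible B_M \<Delta>"
    and "\<forall>\<Delta>'. feasible B_M \<Delta>' \<longrightarrow>
           objective (\<beta> * T) (T_th (\<beta> * T) lam) lam \<Delta> \<le> objective (\<beta> * T) (T_th (\<beta> * T) lam) lam \<Delta>'"
  shows "\<forall>i\<ge>1. \<Delta> (i + 1) \<le> \<Delta> i \<and> 0 \<le> \<Delta> i"
proof -
  define M where "M = \<beta> * T"
  define th where "th = T_th M lam"
  define B where "B = B_M"
  define Pf where "Pf x = P_e1 th lam (M + x)" for x
  define w where "w j = (1::real) / 2 ^ Suc j" for j :: nat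
  have lam: "0 < lam" and B: "0 < B" "B < M" using assms unfolding M_def B_def by auto
  have opt: "\<And>\<Delta>'. feasible B \<Delta>' \<Longrightarrow> objective M th lam \<Delta> \<le> objective M th lam \<Delta>'"
    using assms(7) unfolding M_def th_def B_def by blast
  have feas: "feasible B \<Delta>" using assms(6) unfolding B_def .
  obtain c C where c: "c > 0"
    and N: "\<And>x y. -B \<le> x \<Longrightarrow> x \<le> y \<Longrightarrow> y \<le> 0 \<Longrightarrow> c * (y - x) \<le> Pf x - Pf y"
    and Pz: "\<And>x y. 0 \<le> x \<Longrightarrow> x \<le> y \<Longrightarrow> Pf x - Pf y \<le> c * (y - x)"
    and S: "\<And>x y. -B \<le> x \<Longrightarrow> x < y \<Longrightarrow> Pf y < Pf x"
    and Bd: "\<And>x. -B \<le> x \<Longrightarrow> x \<le> B \<Longrightarrow> \<bar>Pf x\<bar> \<le> C"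
    using key_facts[OF lam B] unfolding Pf_def th_def by blast
  have obj: "objective M th lam D = (\<Sum>j. w j * Pf (D (Suc j)))" for D
    unfolding objective_def w_def Pf_def ..
  have summ: "summable (\<lambda>j. w j * Pf (D (Suc j)))" if "\<And>j. -B \<le> D (Suc j) \<and> D (Suc j) \<le> B" for D
    unfolding w_def by (rule summ_w[of _ C]) (use Bd that in auto)
  have feasD: "feasible B D \<longleftrightarrow> (\<forall>i\<ge>1. 0 \<le> (\<Sum>l = 1..i. D l) \<and> (\<Sum>l = 1..i. D l) \<le> B)" for D
    unfolding feasible_def by auto
  define Sm where "Sm j = (\<Sum>l = 1..j. \<Delta> l)" for j
  have Sm0: "Sm 0 = 0" unfolding Sm_def by simp
  have SmS: "Sm (Suc j) = Sm j + \<Delta> (Suc j)" for j unfolding Sm_def by (rule psum_Suc)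
  have Smb: "0 \<le> Sm j \<and> Sm j \<le> B" for j
    using feas Sm0 B unfolding feasD Sm_def[symmetric] by (cases j) auto
  have Db: "-B \<le> \<Delta> (Suc j) \<and> \<Delta> (Suc j) \<le> B" for j
    using Smb[of j] Smb[of "Suc j"] SmS[of j] by auto
  have nonneg: "0 \<le> \<Delta> (Suc i)" for i
  proof (rule ccontr)
    assume neg: "\<not> 0 \<le> \<Delta> (Suc i)"
    define R where "R = rmax Sm"
    have R0: "R 0 = 0" unfolding R_def by simp
    have RS: "R (Suc j) = max (R j) (Sm (Suc j))" for j unfolding R_def by simp
    have SR: "Sm j \<le> R j" for j
      by (cases j) (auto simp: R0 Sm0 RS)
    have Rb: "0 \<le> R j \<and> R j \<le> B" for j
      using less_imp_le[OF B(1)] by (induction j) (auto simp: R0 RS Smb)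
    define \<Delta>' where "\<Delta>' j = (case j of 0 \<Rightarrow> 0 | Suc m \<Rightarrow> R (Suc m) - R m)" for j
    have D'S: "\<Delta>' (Suc j) = R (Suc j) - R j" for j unfolding \<Delta>'_def by simp
    have psum': "(\<Sum>l = 1..j. \<Delta>' l) = R j" for j
      by (induction j) (auto simp: psum_Suc D'S R0)
    have feas': "feasible B \<Delta>'" unfolding feasD psum' using Rb by auto
    have D'b: "-B \<le> \<Delta>' (Suc j) \<and> \<Delta>' (Suc j) \<le> B" for j
      using Rb[of j] Rb[of "Suc j"] D'S[of j] by auto
    define Dd where "Dd j = Sm j - R j" for j
    have Dd0: "Dd 0 = 0" unfolding Dd_def by (simp add: Sm0 R0)
    have Ddle: "Dd j \<le> 0" for j unfolding Dd_def using SR[of j] by simp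
    have Ddb: "\<bar>Dd j\<bar> \<le> B" for j unfolding Dd_def using Smb[of j] Rb[of j] by auto
    have Ddi: "Dd (Suc i) < 0"
      unfolding Dd_def using SmS[of i] SR[of i] RS[of i] neg by auto
    have tm: "Pf (\<Delta>' (Suc j)) - Pf (\<Delta> (Suc j)) \<le> c * (Dd (Suc j) - Dd j)" for j
    proof (cases "Sm (Suc j) \<le> R j")
      case True
      then have r: "R (Suc j) = R j" using RS by simp
      have e: "\<Delta>' (Suc j) = 0" using D'S r by simp
      have e2: "Dd (Suc j) - Dd j = \<Delta> (Suc j)" unfolding Dd_def using r SmS by simp
      show ?thesis
      proof (cases "\<Delta> (Suc j) \<le> 0")
        case True
        then show ?thesis unfolding e e2 using N[of "\<Delta> (Suc j)" 0] Db[of j] by simp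
      next
        case False
        then show ?thesis unfolding e e2 using Pz[of 0 "\<Delta> (Suc j)"] by simp
      qed
    next
      case False
      then have r: "R (Suc j) = Sm (Suc j)" using RS by simp
      have e: "\<Delta>' (Suc j) = Sm (Suc j) - R j" using D'S r by simp
      have e2: "Dd (Suc j) - Dd j = \<Delta> (Suc j) - \<Delta>' (Suc j)" unfolding Dd_def e using r SmS by simp
      have "0 \<le> \<Delta>' (Suc j)" "\<Delta>' (Suc j) \<le> \<Delta> (Suc j)"
        using False e SmS[of j] SR[of j] by auto
      then show ?thesis unfolding e2 using Pz by blast
    qed
    have s1: "summable (\<lambda>j. w j * Pf (\<Delta>' (Suc j)))" using summ D'b by blast
    have s2: "summable (\<lambda>j. w j * Pf (\<Delta> (Suc j)))" using summ Db by blast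
    have sD: "summable (\<lambda>j. w j * Dd j)" unfolding w_def by (rule summ_w[of _ B]) (use Ddb in auto)
    have sDS: "summable (\<lambda>j. w j * Dd (Suc j))" unfolding w_def by (rule summ_w[of _ B]) (use Ddb in auto)
    have sdiff: "summable (\<lambda>j. w j * Dd (Suc j) - w j * Dd j)" by (rule summable_diff[OF sDS sD])
    have "objective M th lam \<Delta>' - objective M th lam \<Delta> = (\<Sum>j. w j * Pf (\<Delta>' (Suc j)) - w j * Pf (\<Delta> (Suc j)))"
      unfolding obj using suminf_diff[OF s1 s2] .
    also have "\<dots> \<le> (\<Sum>j. c * (w j * Dd (Suc j) - w j * Dd j))"
    proof (rule suminf_le)
      fix j
      have "w j * (Pf (\<Delta>' (Suc j)) - Pf (\<Delta> (Suc j))) \<le> w j * (c * (Dd (Suc j) - Dd j))"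
        using tm[of j] by (intro mult_left_mono) (auto simp: w_def)
      then show "w j * Pf (\<Delta>' (Suc j)) - w j * Pf (\<Delta> (Suc j)) \<le> c * (w j * Dd (Suc j) - w j * Dd j)"
        by (simp add: algebra_simps)
      show "summable (\<lambda>j. w j * Pf (\<Delta>' (Suc j)) - w j * Pf (\<Delta> (Suc j)))" using s1 s2 by (rule summable_diff)
      show "summable (\<lambda>j. c * (w j * Dd (Suc j) - w j * Dd j))" using sdiff by (rule summable_mult)
    qed
    also have "\<dots> = c * ((\<Sum>j. w j * Dd (Suc j)) - (\<Sum>j. w j * Dd j))"
      using suminf_mult[OF sdiff, of c] suminf_diff[OF sDS sD] by simp
    also have "(\<Sum>j. w j * Dd j) = (1/2) * (\<Sum>j. w j * Dd (Suc j))"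
    proof -
      have "(\<Sum>j. w (Suc j) * Dd (Suc j)) = (\<Sum>j. w j * Dd j) - w 0 * Dd 0"
        using suminf_split_head[OF sD] .
      moreover have "(\<Sum>j. w (Suc j) * Dd (Suc j)) = (\<Sum>j. (1/2) * (w j * Dd (Suc j)))"
        unfolding w_def by simp
      moreover have "(\<Sum>j. (1/2) * (w j * Dd (Suc j))) = (1/2) * (\<Sum>j. w j * Dd (Suc j))"
        using suminf_mult[OF sDS] .
      ultimately show ?thesis using Dd0 by simp
    qed
    also have "c * ((\<Sum>j. w j * Dd (Suc j)) - (1/2) * (\<Sum>j. w j * Dd (Suc j))) = (c / 2) * (\<Sum>j. w j * Dd (Suc j))"
      by (simp add: algebra_simps)
    also have "\<dots> < 0"
    proof -
      have sneg: "summable (\<lambda>j. - (w j * Dd (Suc j)))" using sDS by (rule summable_minus)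
      have "(\<Sum>j\<in>{i}. - (w j * Dd (Suc j))) \<le> (\<Sum>j. - (w j * Dd (Suc j)))"
        by (rule sum_le_suminf[OF sneg]) (use Ddle in \<open>auto simp: w_def divide_nonpos_pos\<close>)
      then have "- (w i * Dd (Suc i)) \<le> - (\<Sum>j. w j * Dd (Suc j))"
        using suminf_minus[OF sDS] by simp
      moreover have "w i * Dd (Suc i) < 0" using Ddi by (simp add: w_def divide_neg_pos)
      ultimately have "(\<Sum>j. w j * Dd (Suc j)) < 0" by linarith
      then show ?thesis using c by (simp add: mult_pos_neg)
    qed
    finally have "objective M th lam \<Delta>' < objective M th lam \<Delta>" by simp
    with opt[OF feas'] show False by simp
  qed
  have mono: "\<Delta> (Suc (Suc m)) \<le> \<Delta> (Suc m)" for m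
  proof (rule ccontr)
    assume "\<not> \<Delta> (Suc (Suc m)) \<le> \<Delta> (Suc m)"
    then have lt: "\<Delta> (Suc m) < \<Delta> (Suc (Suc m))" by simp
    define a where "a = \<Delta> (Suc m)"
    define b where "b = \<Delta> (Suc (Suc m))"
    define \<Delta>' where "\<Delta>' j = (if j = Suc m then b else if j = Suc (Suc m) then a else \<Delta> j)" for j
    have ps: "(\<Sum>l = 1..j. \<Delta>' l) = Sm j + (if j = Suc m then b - a else 0)" for j
    proof (induction j)
      case 0
      then show ?case by (simp add: Sm_def \<Delta>'_def)
    next
      case (Suc j)
      then show ?case
        by (auto simp: psum_Suc SmS \<Delta>'_def a_def b_def)
    qed
    have feas': "feasible B \<Delta>'"
      unfolding feasD
    proof (intro allI impI)
      fix i :: nat assume "1 \<le> i"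
      show "0 \<le> (\<Sum>l = 1..i. \<Delta>' l) \<and> (\<Sum>l = 1..i. \<Delta>' l) \<le> B"
      proof (cases "i = Suc m")
        case True
        have "Sm (Suc m) + (b - a) = Sm m + b" using SmS[of m] a_def by simp
        moreover have "Sm m + b \<le> Sm (Suc (Suc m))" using SmS[of m] SmS[of "Suc m"] nonneg[of m] a_def b_def by simp
        moreover have "0 \<le> b" using nonneg[of "Suc m"] b_def by simp
        ultimately show ?thesis unfolding ps using True Smb[of m] Smb[of "Suc (Suc m)"] by auto
      next
        case False
        then show ?thesis unfolding ps using Smb[of i] by simp
      qed
    qed
    have D'b: "-B \<le> \<Delta>' (Suc j) \<and> \<Delta>' (Suc j) \<le> B" for j
      using Db[of j] Db[of m] Db[of "Suc m"] unfolding \<Delta>'_def a_def b_def by auto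
    have s1: "summable (\<lambda>j. w j * Pf (\<Delta>' (Suc j)))" using summ D'b by blast
    have s2: "summable (\<lambda>j. w j * Pf (\<Delta> (Suc j)))" using summ Db by blast
    have "objective M th lam \<Delta>' - objective M th lam \<Delta> = (\<Sum>j. w j * Pf (\<Delta>' (Suc j)) - w j * Pf (\<Delta> (Suc j)))"
      unfolding obj using suminf_diff[OF s1 s2] .
    also have "\<dots> = (\<Sum>j\<in>{m, Suc m}. w j * Pf (\<Delta>' (Suc j)) - w j * Pf (\<Delta> (Suc j)))"
      by (rule suminf_finite) (auto simp: \<Delta>'_def)
    also have "\<dots> = w m * (Pf b - Pf a) + w (Suc m) * (Pf a - Pf b)"
      by (simp add: \<Delta>'_def a_def b_def algebra_simps)
    also have "\<dots> = (w m - w (Suc m)) * (Pf b - Pf a)" by (simp add: algebra_simps)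
    also have "\<dots> < 0"
    proof -
      have "Pf b < Pf a" using S[of a b] lt Db[of m] a_def b_def by simp
      moreover have "w (Suc m) < w m" unfolding w_def by (simp add: divide_strict_left_mono)
      ultimately show ?thesis by (simp add: mult_pos_neg)
    qed
    finally have "objective M th lam \<Delta>' < objective M th lam \<Delta>" by simp
    with opt[OF feas'] show False by simp
  qed
  show ?thesis
  proof (intro allI impI)
    fix i :: nat assume "1 \<le> i"
    then obtain m where "i = Suc m" by (cases i) auto
    then show "\<Delta> (i + 1) \<le> \<Delta> i \<and> 0 \<le> \<Delta> i" using mono[of m] nonneg[of m] by simp
  qed
qed

end
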